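(* Under the standing assumptions below, $(V,+)$ has no normal subgroups invariant under $\mathcal{A}=\langle A,A'\rangle$ other than $0$ and $V$.
   Context: Skew left brace $(B,+,\circ)$: groups $(B,+)$, $(B,\circ)$ with $a\circ(b+c)=a\circ b-a+a\circ c$; $\lambda_a(b)=-a+a\circ b$, $\sigma_a(b)=-a+b+a$, $a*b=-a+a\circ b-b$. Ideal: normal subgroup $I$ of $(B,+)$, $\lambda_a(I)\subseteq I$ for all $a$, normal in $(B,\circ)$. $I*J$ = additive subgroup generated by $\{i*j\}$; $B^{(2)}=B*B$, $B^{(3)}=B^{(2)}*B$. Standing assumptions: $B$ is a finite skew left brace and $X\subseteq B$ with $|X|\ge3$ and $\lambda_a(X)=X$, $\sigma_a(X)=X$ for all $a\in B$; $B$ is additively generated by $X$; the ideal $V$ generated by $\{x-y:x,y\in X\}$ is the smallest non-zero ideal of $B$; $B/V$ is a trivial skew left brace with cyclic additive group; the group $\{\sigma_a\lambda_b|_X:a,b\in V\}$ acts transitively on $X$; and $B^{(3)}=0$. Fix $x\in X$. Let $A\in\mathrm{Aut}(V,+)$ be $Av=x+v-x$ and $A'\in\mathrm{Aut}(V,+)$ the restriction of $\lambda_x$ to $V$; $\mathcal{A}=\langle A,A'\rangle\le\mathrm{Aut}(V)$. *)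

theory Defs
  imports "HOL-Algebra.Algebra"
begin

definition addG :: "'a set \<Rightarrow> ('a \<Rightarrow> 'a \<Rightarrow> 'a) \<Rightarrow> 'a monoid" where
  "addG B pl = \<lparr>carrier = B, monoid.mult = pl,
      one = (THE e. e \<in> B \<and> (\<forall>y\<in>B. pl e y = y \<and> pl y e = y))\<rparr>"

definition circG :: "'a set \<Rightarrow> ('a \<Rightarrow> 'a \<Rightarrow> 'a) \<Rightarrow> 'a monoid" where
  "circG B cc = \<lparr>carrier = B, monoid.mult = cc,
      one = (THE e. e \<in> B \<and> (\<forall>y\<in>B. cc e y = y \<and> cc y e = y))\<rparr>"

definition bzero :: "'a set \<Rightarrow> ('a \<Rightarrow> 'a \<Rightarrow> 'a) \<Rightarrow> 'a" where
  "bzero B pl = \<one>\<^bsub>addG B pl\<^esub>"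

definition bneg :: "'a set \<Rightarrow> ('a \<Rightarrow> 'a \<Rightarrow> 'a) \<Rightarrow> 'a \<Rightarrow> 'a" where
  "bneg B pl a = inv\<^bsub>addG B pl\<^esub> a"

definition skew_brace :: "'a set \<Rightarrow> ('a \<Rightarrow> 'a \<Rightarrow> 'a) \<Rightarrow> ('a \<Rightarrow> 'a \<Rightarrow> 'a) \<Rightarrow> bool" where
  "skew_brace B pl cc \<longleftrightarrow> group (addG B pl) \<and> group (circG B cc) \<and>
     (\<forall>a\<in>B. \<forall>b\<in>B. \<forall>c\<in>B.
        cc a (pl b c) = pl (pl (cc a b) (bneg B pl a)) (cc a c))"

definition blam :: "'a set \<Rightarrow> ('a \<Rightarrow> 'a \<Rightarrow> 'a) \<Rightarrow> ('a \<Rightarrow> 'a \<Rightarrow> 'a) \<Rightarrow> 'a \<Rightarrow> 'a \<Rightarrow> 'a" where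
  "blam B pl cc a b = pl (bneg B pl a) (cc a b)"

definition bsig :: "'a set \<Rightarrow> ('a \<Rightarrow> 'a \<Rightarrow> 'a) \<Rightarrow> 'a \<Rightarrow> 'a \<Rightarrow> 'a" where
  "bsig B pl a b = pl (pl (bneg B pl a) b) a"

definition bstar :: "'a set \<Rightarrow> ('a \<Rightarrow> 'a \<Rightarrow> 'a) \<Rightarrow> ('a \<Rightarrow> 'a \<Rightarrow> 'a) \<Rightarrow> 'a \<Rightarrow> 'a \<Rightarrow> 'a" where
  "bstar B pl cc a b = pl (pl (bneg B pl a) (cc a b)) (bneg B pl b)"

definition brace_ideal :: "'a set \<Rightarrow> ('a \<Rightarrow> 'a \<Rightarrow> 'a) \<Rightarrow> ('a \<Rightarrow> 'a \<Rightarrow> 'a) \<Rightarrow> 'a set \<Rightarrow> bool" where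
  "brace_ideal B pl cc I \<longleftrightarrow> I \<lhd> addG B pl \<and>
     (\<forall>a\<in>B. blam B pl cc a ` I \<subseteq> I) \<and> I \<lhd> circG B cc"

definition ideal_gen :: "'a set \<Rightarrow> ('a \<Rightarrow> 'a \<Rightarrow> 'a) \<Rightarrow> ('a \<Rightarrow> 'a \<Rightarrow> 'a) \<Rightarrow> 'a set \<Rightarrow> 'a set" where
  "ideal_gen B pl cc S = \<Inter>{I. brace_ideal B pl cc I \<and> S \<subseteq> I}"

definition brace_prod :: "'a set \<Rightarrow> ('a \<Rightarrow> 'a \<Rightarrow> 'a) \<Rightarrow> ('a \<Rightarrow> 'a \<Rightarrow> 'a) \<Rightarrow> 'a set \<Rightarrow> 'a set \<Rightarrow> 'a set" where
  "brace_prod B pl cc I J =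
     generate (addG B pl) {bstar B pl cc i j | i j. i \<in> I \<and> j \<in> J}"

text \<open>B/I is a trivial skew left brace: (a o b) + I = (a + b) + I.\<close>
definition quotient_trivial :: "'a set \<Rightarrow> ('a \<Rightarrow> 'a \<Rightarrow> 'a) \<Rightarrow> ('a \<Rightarrow> 'a \<Rightarrow> 'a) \<Rightarrow> 'a set \<Rightarrow> bool" where
  "quotient_trivial B pl cc I \<longleftrightarrow>
     (\<forall>a\<in>B. \<forall>b\<in>B. pl (bneg B pl (pl a b)) (cc a b) \<in> I)"

definition quotient_add_cyclic :: "'a set \<Rightarrow> ('a \<Rightarrow> 'a \<Rightarrow> 'a) \<Rightarrow> 'a set \<Rightarrow> bool" where
  "quotient_add_cyclic B pl I \<longleftrightarrow>
     (\<exists>g\<in>carrier (addG B pl Mod I). carrier (addG B pl Mod I) = generate (addG B pl Mod I) {g})"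

end

theory Submission imports Defs begin

definition kerl where "kerl B pl cc = {a\<in>B. \<forall>b\<in>B. blam B pl cc a b = b}"

locale sb =
  fixes B :: "'a set" and pl cc :: "'a \<Rightarrow> 'a \<Rightarrow> 'a"
  assumes brace: "skew_brace B pl cc"
begin

lemma G_carrier[simp]: "carrier (addG B pl) = B" by (simp add: addG_def)
lemma G_mult[simp]: "a \<otimes>\<^bsub>addG B pl\<^esub> b = pl a b" by (simp add: addG_def)
lemma C_carrier[simp]: "carrier (circG B cc) = B" by (simp add: circG_def)
lemma C_mult[simp]: "a \<otimes>\<^bsub>circG B cc\<^esub> b = cc a b" by (simp add: circG_def)

sublocale G: group "addG B pl" using brace by (simp add: skew_brace_def)
sublocale C: group "circG B cc" using brace by (simp add: skew_brace_def)

abbreviation z where "z \<equiv> bzero B pl"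
abbreviation ng where "ng a \<equiv> bneg B pl a"
abbreviation ic where "ic a \<equiv> inv\<^bsub>circG B cc\<^esub> a"
abbreviation K where "K \<equiv> kerl B pl cc"
abbreviation lam where "lam a b \<equiv> blam B pl cc a b"

lemma z_def': "z = \<one>\<^bsub>addG B pl\<^esub>" by (simp add: bzero_def)
lemma ng_def': "ng a = inv\<^bsub>addG B pl\<^esub> a" by (simp add: bneg_def)

lemma z_in[simp]: "z \<in> B" using G.one_closed by (simp add: z_def')
lemma ng_in[simp]: "a \<in> B \<Longrightarrow> ng a \<in> B" using G.inv_closed by (simp add: ng_def')
lemma pl_in[simp]: "a \<in> B \<Longrightarrow> b \<in> B \<Longrightarrow> pl a b \<in> B" using G.m_closed by simp
lemma cc_in[simp]: "a \<in> B \<Longrightarrow> b \<in> B \<Longrightarrow> cc a b \<in> B" using C.m_closed by simp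
lemma ic_in[simp]: "a \<in> B \<Longrightarrow> ic a \<in> B" using C.inv_closed by simp
lemma pl_assoc[simp]: "a \<in> B \<Longrightarrow> b \<in> B \<Longrightarrow> c \<in> B \<Longrightarrow> pl (pl a b) c = pl a (pl b c)"
  using G.m_assoc by simp
lemma cc_assoc: "a \<in> B \<Longrightarrow> b \<in> B \<Longrightarrow> c \<in> B \<Longrightarrow> cc (cc a b) c = cc a (cc b c)"
  using C.m_assoc by simp
lemma pl_z[simp]: "a \<in> B \<Longrightarrow> pl a z = a" using G.r_one by (simp add: z_def')
lemma z_pl[simp]: "a \<in> B \<Longrightarrow> pl z a = a" using G.l_one by (simp add: z_def')
lemma pl_ng[simp]: "a \<in> B \<Longrightarrow> pl a (ng a) = z" using G.r_inv by (simp add: z_def' ng_def')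
lemma ng_pl[simp]: "a \<in> B \<Longrightarrow> pl (ng a) a = z" using G.l_inv by (simp add: z_def' ng_def')
lemma pl_ng2[simp]: "a \<in> B \<Longrightarrow> b \<in> B \<Longrightarrow> pl a (pl (ng a) b) = b"
  by (subst pl_assoc[symmetric]) auto
lemma ng_pl2[simp]: "a \<in> B \<Longrightarrow> b \<in> B \<Longrightarrow> pl (ng a) (pl a b) = b"
  by (subst pl_assoc[symmetric]) auto
lemma ng_ng[simp]: "a \<in> B \<Longrightarrow> ng (ng a) = a" using G.inv_inv by (simp add: ng_def')
lemma ng_plus: "a \<in> B \<Longrightarrow> b \<in> B \<Longrightarrow> ng (pl a b) = pl (ng b) (ng a)"
  using G.inv_mult_group by (simp add: ng_def')
lemma ng_z[simp]: "ng z = z" using G.inv_one by (simp add: z_def' ng_def')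
lemma pl_lcancel[simp]: "a \<in> B \<Longrightarrow> b \<in> B \<Longrightarrow> c \<in> B \<Longrightarrow> pl a b = pl a c \<longleftrightarrow> b = c"
proof
  assume a: "a \<in> B" "b \<in> B" "c \<in> B" and h: "pl a b = pl a c"
  from h have "pl (ng a) (pl a b) = pl (ng a) (pl a c)" by (rule arg_cong)
  thus "b = c" using a by simp
qed simp
lemma pl_rcancel[simp]: "a \<in> B \<Longrightarrow> b \<in> B \<Longrightarrow> c \<in> B \<Longrightarrow> pl b a = pl c a \<longleftrightarrow> b = c"
proof
  assume a: "a \<in> B" "b \<in> B" "c \<in> B" and h: "pl b a = pl c a"
  from h have "pl (pl b a) (ng a) = pl (pl c a) (ng a)" by (rule arg_cong)
  thus "b = c" using a by simp
qed simp
lemma ng_unique: "a \<in> B \<Longrightarrow> b \<in> B \<Longrightarrow> pl a b = z \<Longrightarrow> ng a = b"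
proof -
  assume a: "a \<in> B" "b \<in> B" and h: "pl a b = z"
  from h have "pl (ng a) (pl a b) = pl (ng a) z" by (rule arg_cong)
  thus "ng a = b" using a by simp
qed

lemma dist: "a \<in> B \<Longrightarrow> b \<in> B \<Longrightarrow> c \<in> B \<Longrightarrow> cc a (pl b c) = pl (pl (cc a b) (ng a)) (cc a c)"
  using brace by (simp add: skew_brace_def)

lemma lam_in[simp]: "a \<in> B \<Longrightarrow> b \<in> B \<Longrightarrow> lam a b \<in> B" by (simp add: blam_def)
lemma cc_lam: "a \<in> B \<Longrightarrow> b \<in> B \<Longrightarrow> cc a b = pl a (lam a b)" by (simp add: blam_def)
lemma lam_plus: "a \<in> B \<Longrightarrow> b \<in> B \<Longrightarrow> c \<in> B \<Longrightarrow> lam a (pl b c) = pl (lam a b) (lam a c)"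
  by (simp add: blam_def dist)

lemma cc_z: "a \<in> B \<Longrightarrow> cc a z = a"
proof -
  assume a: "a \<in> B"
  have "cc a z = pl (pl (cc a z) (ng a)) (cc a z)" using dist[OF a z_in z_in] by simp
  hence "pl (cc a z) z = pl (cc a z) (pl (ng a) (cc a z))" using a by simp
  hence "z = pl (ng a) (cc a z)" using a pl_lcancel[of "cc a z" z "pl (ng a) (cc a z)"] by simp
  hence "pl a z = pl a (pl (ng a) (cc a z))" by (rule arg_cong)
  thus ?thesis using a by simp
qed

lemma oneC: "\<one>\<^bsub>circG B cc\<^esub> = z"
  using cc_z[of "\<one>\<^bsub>circG B cc\<^esub>"] C.l_one[of z] C.one_closed by simp

lemma z_cc[simp]: "a \<in> B \<Longrightarrow> cc z a = a" using C.l_one oneC by simp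
lemma cc_ic[simp]: "a \<in> B \<Longrightarrow> cc a (ic a) = z" using C.r_inv oneC by simp
lemma ic_cc[simp]: "a \<in> B \<Longrightarrow> cc (ic a) a = z" using C.l_inv oneC by simp

lemma lam_z[simp]: "b \<in> B \<Longrightarrow> lam z b = b" by (simp add: blam_def)

lemma lam_cc: "a \<in> B \<Longrightarrow> b \<in> B \<Longrightarrow> c \<in> B \<Longrightarrow> lam (cc a b) c = lam a (lam b c)"
proof -
  assume a: "a \<in> B" and b: "b \<in> B" and c: "c \<in> B"
  have "cc (cc a b) c = cc a (cc b c)" using cc_assoc a b c by simp
  also have "\<dots> = pl a (lam a (pl b (lam b c)))" using a b c by (simp add: cc_lam)
  also have "\<dots> = pl (cc a b) (lam a (lam b c))" using a b c by (simp add: lam_plus cc_lam)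
  finally show ?thesis using a b c by (simp add: cc_lam[of "cc a b"])
qed

lemma lam_ic_lam[simp]: "a \<in> B \<Longrightarrow> c \<in> B \<Longrightarrow> lam (ic a) (lam a c) = c"
  using lam_cc[of "ic a" a c] by simp
lemma lam_lam_ic[simp]: "a \<in> B \<Longrightarrow> c \<in> B \<Longrightarrow> lam a (lam (ic a) c) = c"
  using lam_cc[of a "ic a" c] by simp


lemma K_sub: "K \<subseteq> B" unfolding kerl_def by blast
lemma K_B[simp]: "k \<in> K \<Longrightarrow> k \<in> B" unfolding kerl_def by blast
lemma K_lamid[simp]: "k \<in> K \<Longrightarrow> b \<in> B \<Longrightarrow> lam k b = b" unfolding kerl_def by blast
lemma K_cc: "k \<in> K \<Longrightarrow> b \<in> B \<Longrightarrow> cc k b = pl k b" by (simp add: cc_lam)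
lemma K_I: "a \<in> B \<Longrightarrow> (\<And>b. b \<in> B \<Longrightarrow> lam a b = b) \<Longrightarrow> a \<in> K"
  unfolding kerl_def by blast
lemma z_K[simp]: "z \<in> K" by (rule K_I) auto
lemma K_plus: "k \<in> K \<Longrightarrow> l \<in> K \<Longrightarrow> pl k l \<in> K"
proof -
  assume k: "k \<in> K" and l: "l \<in> K"
  have "lam (pl k l) c = c" if c: "c \<in> B" for c
    using lam_cc[of k l c] K_cc[of k l] k l c by simp
  thus ?thesis using k l by (intro K_I) auto
qed
lemma K_ic: "k \<in> K \<Longrightarrow> ic k \<in> K"
proof -
  assume k: "k \<in> K"
  have "lam (ic k) c = c" if c: "c \<in> B" for c
    using lam_ic_lam[of k c] k c by simp
  thus ?thesis using k by (intro K_I) auto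
qed
lemma K_ic_ng: "k \<in> K \<Longrightarrow> ic k = ng k"
proof -
  assume k: "k \<in> K"
  have "cc k (ng k) = z" using k by (simp add: K_cc)
  hence "cc (ic k) (cc k (ng k)) = ic k" using k cc_z by simp
  thus ?thesis using k by (simp add: cc_assoc[symmetric])
qed
lemma K_ng: "k \<in> K \<Longrightarrow> ng k \<in> K" using K_ic K_ic_ng by simp
lemma K_conj_cc: "a \<in> B \<Longrightarrow> k \<in> K \<Longrightarrow> cc (cc a k) (ic a) \<in> K"
  by (intro K_I) (auto simp: lam_cc)
lemma conj_cc_K: "a \<in> B \<Longrightarrow> k \<in> K \<Longrightarrow> cc (cc a k) (ic a) = pl (pl a (lam a k)) (ng a)"
proof -
  assume a: "a \<in> B" and k: "k \<in> K"
  have "cc (cc a k) (ic a) = cc a (cc k (ic a))" using a k by (simp add: cc_assoc)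
  also have "\<dots> = cc a (pl k (ic a))" using a k by (simp add: K_cc)
  also have "\<dots> = pl (pl (cc a k) (ng a)) (cc a (ic a))" using a k by (simp add: dist del: pl_assoc)
  also have "\<dots> = pl (pl a (lam a k)) (ng a)" using a k by (simp add: cc_lam[of a k])
  finally show ?thesis .
qed

end

locale sb3 = sb +
  assumes starK: "\<And>a b. a \<in> B \<Longrightarrow> b \<in> B \<Longrightarrow> bstar B pl cc a b \<in> K"
begin

lemma lam_star: "a \<in> B \<Longrightarrow> b \<in> B \<Longrightarrow> lam a b = pl (bstar B pl cc a b) b"
  by (simp add: bstar_def blam_def)
lemma K_lam: "a \<in> B \<Longrightarrow> k \<in> K \<Longrightarrow> lam a k \<in> K"
  using lam_star[of a k] starK[of a k] K_plus by simp
lemma lam_plusK: "c \<in> B \<Longrightarrow> k \<in> K \<Longrightarrow> b \<in> B \<Longrightarrow> lam (pl c k) b = lam c b"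
proof -
  assume c: "c \<in> B" and k: "k \<in> K" and b: "b \<in> B"
  have "pl c k = cc c (lam (ic c) k)" using c k by (simp add: cc_lam)
  moreover have "lam (ic c) k \<in> K" using K_lam c k by simp
  ultimately show ?thesis using c b by (simp add: lam_cc)
qed
lemma K_conj: "c \<in> B \<Longrightarrow> k \<in> K \<Longrightarrow> pl (pl c k) (ng c) \<in> K"
proof -
  assume c: "c \<in> B" and k: "k \<in> K"
  define d where "d = lam (ic c) k"
  have d: "d \<in> K" using K_lam c k by (simp add: d_def)
  have cd: "cc c d = pl c k" using c k by (simp add: cc_lam d_def)
  have "cc (cc c d) (ic c) = cc c (cc d (ic c))" using c d by (simp add: cc_assoc)
  also have "\<dots> = cc c (pl d (ic c))" using c d by (simp add: K_cc)
  also have "\<dots> = pl (pl (cc c d) (ng c)) (cc c (ic c))" using c d by (simp add: dist del: pl_assoc)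
  also have "\<dots> = pl (pl c k) (ng c)" using c k by (simp add: cd)
  finally show ?thesis using K_conj_cc[OF c d] by simp
qed

lemma K_ideal: "brace_ideal B pl cc K"
  unfolding brace_ideal_def
proof (intro conjI ballI)
  show "K \<lhd> addG B pl"
    unfolding G.normal_inv_iff
  proof (intro conjI ballI)
    show "subgroup K (addG B pl)"
    proof (rule G.subgroupI)
      show "K \<noteq> {}" using z_K by blast
    qed (auto simp: K_sub K_plus K_ng simp flip: ng_def')
    fix x h assume "x \<in> carrier (addG B pl)" "h \<in> K"
    thus "x \<otimes>\<^bsub>addG B pl\<^esub> h \<otimes>\<^bsub>addG B pl\<^esub> inv\<^bsub>addG B pl\<^esub> x \<in> K"
      using K_conj by (simp flip: ng_def')
  qed
  fix a assume "a \<in> B" thus "lam a ` K \<subseteq> K" using K_lam by auto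
next
  show "K \<lhd> circG B cc"
    unfolding C.normal_inv_iff
  proof (intro conjI ballI)
    show "subgroup K (circG B cc)"
    proof (rule C.subgroupI)
      show "K \<noteq> {}" using z_K by blast
    qed (auto simp: K_sub K_plus K_ic K_cc)
    fix x h assume "x \<in> carrier (circG B cc)" "h \<in> K"
    thus "x \<otimes>\<^bsub>circG B cc\<^esub> h \<otimes>\<^bsub>circG B cc\<^esub> ic x \<in> K"
      using K_conj_cc by simp
  qed
qed

lemma lam_hom: "a \<in> B \<Longrightarrow> b \<in> B \<Longrightarrow> c \<in> B \<Longrightarrow> pl (ng (pl a b)) (cc a b) \<in> K \<Longrightarrow>
   lam (pl a b) c = lam a (lam b c)"
proof -
  assume a: "a \<in> B" and b: "b \<in> B" and c: "c \<in> B" and w: "pl (ng (pl a b)) (cc a b) \<in> K"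
  define w where "w = pl (ng (pl a b)) (cc a b)"
  have "pl (cc a b) (ng w) = pl a b" using a b by (simp add: w_def ng_plus)
  hence "lam (pl a b) c = lam (pl (cc a b) (ng w)) c" by simp
  also have "\<dots> = lam (cc a b) c" using lam_plusK K_ng w a b c by (simp add: w_def)
  finally show ?thesis using a b c by (simp add: lam_cc)
qed

end

theorem lemma5p4:
  fixes B :: "'a set" and pl cc :: "'a \<Rightarrow> 'a \<Rightarrow> 'a" and Xs :: "'a set" and x :: 'a
  defines "V \<equiv> ideal_gen B pl cc {pl y (bneg B pl z) | y z. y \<in> Xs \<and> z \<in> Xs}"
  assumes brace: "skew_brace B pl cc"
    and finB: "finite B"
    and XB: "Xs \<subseteq> B"
    and cardX: "card Xs \<ge> 3"
    and lamX: "\<forall>a\<in>B. blam B pl cc a ` Xs = Xs"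
    and sigX: "\<forall>a\<in>B. bsig B pl a ` Xs = Xs"
    and genX: "generate (addG B pl) Xs = B"
    and Vnz: "V \<noteq> {bzero B pl}"
    and Vmin: "\<forall>I. brace_ideal B pl cc I \<and> I \<noteq> {bzero B pl} \<longrightarrow> V \<subseteq> I"
    and triv: "quotient_trivial B pl cc V"
    and cyc: "quotient_add_cyclic B pl V"
    and trans: "\<forall>y\<in>Xs. \<forall>z\<in>Xs. \<exists>a\<in>V. \<exists>b\<in>V. bsig B pl a (blam B pl cc b y) = z"
    and B3: "brace_prod B pl cc (brace_prod B pl cc B B) B = {bzero B pl}"
    and xXs: "x \<in> Xs"
  shows "\<forall>N. normal N ((addG B pl)\<lparr>carrier := V\<rparr>)
            \<and> (\<lambda>v. pl (pl x v) (bneg B pl x)) ` N = N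
            \<and> blam B pl cc x ` N = N
          \<longrightarrow> N = {bzero B pl} \<or> N = V"
proof -
  interpret sb B pl cc using brace by (simp add: sb_def)
  have starK: "bstar B pl cc a b \<in> K" if a: "a \<in> B" and b: "b \<in> B" for a b
  proof -
    have u: "bstar B pl cc a b \<in> brace_prod B pl cc B B"
      unfolding brace_prod_def by (rule generate.incl) (use a b in blast)
    have uB: "bstar B pl cc a b \<in> B" using a b by (simp add: bstar_def)
    have "lam (bstar B pl cc a b) c = c" if c: "c \<in> B" for c
    proof -
      have "bstar B pl cc (bstar B pl cc a b) c \<in> brace_prod B pl cc (brace_prod B pl cc B B) B"
        unfolding brace_prod_def
        by (rule generate.incl) (use u c in \<open>unfold brace_prod_def, blast\<close>)
      hence "bstar B pl cc (bstar B pl cc a b) c = z" using B3 by simp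
      hence "pl (lam (bstar B pl cc a b) c) (ng c) = z" by (simp add: bstar_def blam_def)
      thus ?thesis using c uB by (metis lam_in ng_in ng_ng ng_unique)
    qed
    thus ?thesis using uB by (intro K_I) auto
  qed
  interpret sb3 B pl cc by (unfold_locales) (rule starK)
  define S where "S = {pl y (bneg B pl z) | y z. y \<in> Xs \<and> z \<in> Xs}"
  have Bideal: "brace_ideal B pl cc B"
    unfolding brace_ideal_def using G.normal_self C.normal_self by auto
  have SB: "{pl y (ng z) |y z. y \<in> Xs \<and> z \<in> Xs} \<subseteq> B" using XB by (blast intro: pl_in ng_in)
  have VB: "V \<subseteq> B" unfolding V_def ideal_gen_def using Bideal SB by blast
  have SV: "S \<subseteq> V" unfolding V_def ideal_gen_def S_def by auto
  have xB: "x \<in> B" using XB xXs by auto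
  have zV: "z \<in> V" using SV xXs xB unfolding S_def by force
  have Knz: "K \<noteq> {z}"
  proof
    assume Kz: "K = {z}"
    have "a \<in> K" if a: "a \<in> B" for a
    proof -
      have "lam a b = b" if b: "b \<in> B" for b
      proof -
        have "bstar B pl cc a b = z" using starK[OF a b] Kz by blast
        thus ?thesis using lam_star[OF a b] b by simp
      qed
      thus ?thesis using a by (intro K_I) auto
    qed
    hence "V \<subseteq> {z}" using VB Kz by blast
    thus False using zV Vnz by auto
  qed
  have VK: "V \<subseteq> K" using Vmin K_ideal Knz by blast
  have lamhom: "lam (pl a b) c = lam a (lam b c)" if "a \<in> B" "b \<in> B" "c \<in> B" for a b c
    using lam_hom that triv VK unfolding quotient_trivial_def by blast
  show ?thesis
  proof (intro allI impI)
    fix N assume hyp: "normal N ((addG B pl)\<lparr>carrier := V\<rparr>)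
            \<and> (\<lambda>v. pl (pl x v) (bneg B pl x)) ` N = N
            \<and> blam B pl cc x ` N = N"
    hence hN: "normal N ((addG B pl)\<lparr>carrier := V\<rparr>)"
      and hA: "(\<lambda>v. pl (pl x v) (ng x)) ` N = N" and hL: "lam x ` N = N" by auto
    have grpV: "group ((addG B pl)\<lparr>carrier := V\<rparr>)" using hN by (simp add: normal_def)
    have subN: "subgroup N ((addG B pl)\<lparr>carrier := V\<rparr>)" using hN by (simp add: normal_def)
    have subV: "subgroup V (addG B pl)" using G.group_incl_imp_subgroup VB grpV by simp
    have subNG: "subgroup N (addG B pl)" using G.incl_subgroup subV subN by blast
    have NV: "N \<subseteq> V" using subN subgroup.subset by fastforce
    have NB: "N \<subseteq> B" using NV VB by auto
    have NK: "N \<subseteq> K" using NV VK by auto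
    have zN: "z \<in> N" using subgroup.one_closed[OF subNG] by (simp add: z_def')
    have Nng: "ng n \<in> N" if "n \<in> N" for n
      using subgroup.m_inv_closed[OF subNG that] by (simp add: ng_def')
    have Npl: "pl n m \<in> N" if "n \<in> N" "m \<in> N" for n m
      using subgroup.m_closed[OF subNG that] by simp
    have vconj: "pl (pl v n) (ng v) \<in> N" if v: "v \<in> V" and n: "n \<in> N" for v n
    proof -
      have "v \<otimes>\<^bsub>(addG B pl)\<lparr>carrier := V\<rparr>\<^esub> n \<otimes>\<^bsub>(addG B pl)\<lparr>carrier := V\<rparr>\<^esub>
             inv\<^bsub>(addG B pl)\<lparr>carrier := V\<rparr>\<^esub> v \<in> N"
        using group.normal_inv_iff[OF grpV] hN v n by auto
      thus ?thesis using G.m_inv_consistent[OF subV v] by (simp add: ng_def')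
    qed
    have xconj: "pl (pl x n) (ng x) \<in> N" if "n \<in> N" for n using hA that by auto
    have xconj': "pl (pl (ng x) n) x \<in> N" if n: "n \<in> N" for n
    proof -
      obtain m where m: "m \<in> N" "n = pl (pl x m) (ng x)" using hA n by blast
      thus ?thesis using xB NB by auto
    qed
    have yV: "pl y (ng x) \<in> V" if "y \<in> Xs" for y using SV that xXs unfolding S_def by blast
    have ydec: "y = pl (pl y (ng x)) x" if "y \<in> Xs" for y using that XB xB by auto
    define P where "P c \<longleftrightarrow> (\<forall>n\<in>N. pl (pl c n) (ng c) \<in> N) \<and> (\<forall>n\<in>N. pl (pl (ng c) n) c \<in> N)" for c
    have Py: "P y" if y: "y \<in> Xs" for y
    proof -
      define v where "v = pl y (ng x)"
      have v: "v \<in> V" "v \<in> B" using yV y VB by (auto simp: v_def)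
      have yv: "y = pl v x" using ydec y by (simp add: v_def)
      have nv: "ng v \<in> V" using subgroup.m_inv_closed[OF subV v(1)] by (simp add: ng_def')
      show ?thesis unfolding P_def
      proof (intro conjI ballI)
        fix n assume n: "n \<in> N"
        have nB: "n \<in> B" using n NB by blast
        have "pl (pl v (pl (pl x n) (ng x))) (ng v) \<in> N" using vconj v xconj n by blast
        thus "pl (pl y n) (ng y) \<in> N" using yv nB v xB by (simp add: ng_plus)
        have "pl (pl (ng x) (pl (pl (ng v) n) (ng (ng v)))) x \<in> N" using vconj nv xconj' n by blast
        thus "pl (pl (ng y) n) y \<in> N" using yv nB v xB by (simp add: ng_plus)
      qed
    qed
    have Pz: "P z" unfolding P_def
    proof (intro conjI ballI)
      fix n assume "n \<in> N"
      hence nB: "n \<in> B" using NB by blast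
      thus "pl (pl z n) (ng z) \<in> N" "pl (pl (ng z) n) z \<in> N" using \<open>n \<in> N\<close> by simp_all
    qed
    have Pneg: "P (ng c)" if c: "c \<in> B" and Pc: "P c" for c
      using Pc c unfolding P_def by simp
    have Pplus: "P (pl a b)" if a: "a \<in> B" and b: "b \<in> B" and Pa: "P a" and Pb: "P b" for a b
      unfolding P_def
    proof (intro conjI ballI)
      fix n assume n: "n \<in> N"
      hence nB: "n \<in> B" using NB by blast
      have m1: "pl (pl b n) (ng b) \<in> N" using Pb n unfolding P_def by blast
      hence "pl (pl a (pl (pl b n) (ng b))) (ng a) \<in> N" using Pa unfolding P_def by blast
      thus "pl (pl (pl a b) n) (ng (pl a b)) \<in> N" using a b nB by (simp add: ng_plus)
      have m2: "pl (pl (ng a) n) a \<in> N" using Pa n unfolding P_def by blast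
      hence "pl (pl (ng b) (pl (pl (ng a) n) a)) b \<in> N" using Pb unfolding P_def by blast
      thus "pl (pl (ng (pl a b)) n) (pl a b) \<in> N" using a b nB by (simp add: ng_plus)
    qed
    have Pall: "c \<in> B \<and> P c" if "c \<in> generate (addG B pl) Xs" for c
      using that
    proof (induction c rule: generate.induct)
      case one
      then show ?case using Pz z_in by (simp add: z_def')
    next
      case (incl h)
      then show ?case using Py XB by blast
    next
      case (inv h)
      have hB: "h \<in> B" using inv XB by blast
      show ?case using Pneg[OF hB Py[OF inv]] ng_in[OF hB] by (simp add: ng_def')
    next
      case (eng h1 h2)
      then show ?case using Pplus by simp
    qed
    have PB: "P c" if "c \<in> B" for c using Pall genX that by blast
    have lamy: "lam y c = lam x c" if y: "y \<in> Xs" and c: "c \<in> B" for y c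
    proof -
      define v where "v = pl y (ng x)"
      have v: "v \<in> K" "v \<in> B" using yV y VK VB by (auto simp: v_def)
      have yv: "y = pl v x" using ydec y by (simp add: v_def)
      have "lam (pl v x) c = lam v (lam x c)" using lamhom v xB c by blast
      thus ?thesis using yv v c xB by simp
    qed
    have Qy: "lam y ` N = N" if y: "y \<in> Xs" for y
    proof -
      have "lam y ` N = lam x ` N" by (rule image_cong) (use NB lamy y in auto)
      thus ?thesis using hL by simp
    qed
    have Qneg: "lam (ng c) ` N = N" if c: "c \<in> B" and Qc: "lam c ` N = N" for c
    proof -
      have "lam (ng c) ` N = lam (ng c) ` (lam c ` N)" using Qc by simp
      also have "\<dots> = (\<lambda>n. lam (ng c) (lam c n)) ` N" by (simp add: image_image)
      also have "\<dots> = (\<lambda>n. n) ` N"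
      proof (rule image_cong)
        fix n assume "n \<in> N"
        hence nB: "n \<in> B" using NB by blast
        have "lam (pl (ng c) c) n = lam (ng c) (lam c n)" using lamhom[of "ng c" c n] c nB by simp
        thus "lam (ng c) (lam c n) = n" using c nB by simp
      qed simp
      finally show ?thesis by simp
    qed
    have Qplus: "lam (pl a b) ` N = N" if a: "a \<in> B" and b: "b \<in> B"
       and Qa: "lam a ` N = N" and Qb: "lam b ` N = N" for a b
    proof -
      have "lam (pl a b) ` N = (\<lambda>n. lam a (lam b n)) ` N"
        by (rule image_cong) (use lamhom a b NB in auto)
      also have "\<dots> = lam a ` (lam b ` N)" by (simp add: image_image)
      finally show ?thesis using Qa Qb by simp
    qed
    have Qall: "c \<in> B \<and> lam c ` N = N" if "c \<in> generate (addG B pl) Xs" for c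
      using that
    proof (induction c rule: generate.induct)
      case one
      have "lam z ` N = (\<lambda>n. n) ` N" by (rule image_cong) (use NB in auto)
      then show ?case using z_in by (simp add: z_def')
    next
      case (incl h)
      then show ?case using Qy XB by blast
    next
      case (inv h)
      have hB: "h \<in> B" using inv XB by blast
      show ?case using Qneg[OF hB Qy[OF inv]] ng_in[OF hB] by (simp add: ng_def')
    next
      case (eng h1 h2)
      then show ?case using Qplus by simp
    qed
    have QB: "lam c ` N = N" if "c \<in> B" for c using Qall genX that by blast
    have Nid: "brace_ideal B pl cc N"
      unfolding brace_ideal_def
    proof (intro conjI ballI)
      show "N \<lhd> addG B pl"
        unfolding G.normal_inv_iff
      proof (intro conjI ballI)
        show "subgroup N (addG B pl)" by (rule subNG)
        fix c h assume "c \<in> carrier (addG B pl)" "h \<in> N"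
        thus "c \<otimes>\<^bsub>addG B pl\<^esub> h \<otimes>\<^bsub>addG B pl\<^esub> inv\<^bsub>addG B pl\<^esub> c \<in> N"
          using PB unfolding P_def by (simp flip: ng_def')
      qed
      fix a assume "a \<in> B" thus "lam a ` N \<subseteq> N" using QB by simp
    next
      show "N \<lhd> circG B cc"
        unfolding C.normal_inv_iff
      proof (intro conjI ballI)
        show "subgroup N (circG B cc)"
        proof (rule C.subgroupI)
          show "N \<noteq> {}" using zN by blast
        next
          fix n assume n: "n \<in> N"
          hence "n \<in> K" using NK by blast
          thus "ic n \<in> N" using K_ic_ng Nng n by simp
        next
          fix n m assume n: "n \<in> N" and m: "m \<in> N"
          hence "n \<in> K" "m \<in> B" using NK NB by blast+
          thus "n \<otimes>\<^bsub>circG B cc\<^esub> m \<in> N" using K_cc Npl n m by simp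
        qed (use NB in simp)
        fix a n assume a: "a \<in> carrier (circG B cc)" and n: "n \<in> N"
        have nK: "n \<in> K" using n NK by blast
        have aB: "a \<in> B" using a by simp
        have ln: "lam a n \<in> N" using QB aB n by blast
        have "pl (pl a (lam a n)) (ng a) \<in> N" using PB aB ln unfolding P_def by blast
        thus "a \<otimes>\<^bsub>circG B cc\<^esub> n \<otimes>\<^bsub>circG B cc\<^esub> ic a \<in> N"
          using conj_cc_K[OF aB nK] by simp
      qed
    qed
    show "N = {bzero B pl} \<or> N = V"
    proof (cases "N = {z}")
      case False
      hence "V \<subseteq> N" using Vmin Nid by blast
      thus ?thesis using NV by blast
    qed simp
  qed
qed
end
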